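(* Let $f\in\mathbb{R}[X_1,\dots,X_n]$ be a non-constant polynomial of degree $2d$ with $|\Omega|=1$. Then $f_*=f_{sos}=f_{gp}$.
   Context: $\mathbb{N}=\{0,1,2,\dots\}$. For $\alpha\in\mathbb{N}^n$ write $\underline{X}^\alpha=X_1^{\alpha_1}\cdots X_n^{\alpha_n}$, $|\alpha|=\sum_i\alpha_i$, and for $a\in\mathbb{R}^n$, $a^\alpha=\prod_i a_i^{\alpha_i}$ with $0^0=1$. For $f=\sum_\alpha f_\alpha\underline{X}^\alpha$ of degree $2d$: $f_0$ is the constant term, $f_{2d,i}$ the coefficient of $X_i^{2d}$, $\Omega=\{\alpha: f_\alpha\ne0\}\setminus\{\underline{0},2d\epsilon_1,\dots,2d\epsilon_n\}$, $\Delta=\{\alpha\in\Omega:\ f_\alpha<0\text{ or }\alpha_i\text{ odd for some }i\}$, $\Delta^{<2d}=\{\alpha\in\Delta:|\alpha|<2d\}$. Define $f_*=\inf\{f(x):x\in\mathbb{R}^n\}$, $f_{sos}=\sup\{r\in\mathbb{R}: f-r\text{ is a sum of squares of polynomials}\}$, and $f_{gp}=\sup$ of the set of $r\in\mathbb{R}$ for which there exist reals $a_{\alpha,i}\ge0$ ($\alpha\in\Delta$, $i=1,\dots,n$), with $a_{\alpha,i}=0$ iff $\alpha_i=0$, such that, with $a_\alpha=(a_{\alpha,1},\dots,a_{\alpha,n})$: (1) $(2d)^{2d}a_\alpha^\alpha=|f_\alpha|^{2d}\alpha^\alpha$ for each $\alpha\in\Delta$ with $|\alpha|=2d$; (2)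 $f_{2d,i}\ge\sum_{\alpha\in\Delta}a_{\alpha,i}$ for all $i$; (3) $f_0-r\ge\sum_{\alpha\in\Delta^{<2d}}(2d-|\alpha|)\big[\frac{|f_\alpha|^{2d}\alpha^\alpha}{(2d)^{2d}a_\alpha^\alpha}\big]^{1/(2d-|\alpha|)}$ (with $\sup\emptyset=-\infty$). *)

theory Defs
  imports "HOL-Analysis.Analysis" "HOL-Library.Poly_Mapping" "HOL-Library.Extended_Real"
begin

text \<open>Multivariate real polynomials in variables X_0,...,X_{n-1}, represented as finitely
  supported maps from exponent vectors (finitely supported nat => nat) to real coefficients.\<close>

type_synonym mpoly = "(nat \<Rightarrow>\<^sub>0 nat) \<Rightarrow>\<^sub>0 real"

definition in_vars :: "nat \<Rightarrow> mpoly \<Rightarrow> bool" where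
  "in_vars n f \<longleftrightarrow> (\<forall>\<alpha>\<in>Poly_Mapping.keys f. Poly_Mapping.keys \<alpha> \<subseteq> {..<n})"

definition mdeg :: "(nat \<Rightarrow>\<^sub>0 nat) \<Rightarrow> nat" where
  "mdeg \<alpha> = (\<Sum>i\<in>Poly_Mapping.keys \<alpha>. Poly_Mapping.lookup \<alpha> i)"

definition total_degree :: "mpoly \<Rightarrow> nat" where
  "total_degree f = (if f = 0 then 0 else Max (mdeg ` Poly_Mapping.keys f))"

definition meval :: "mpoly \<Rightarrow> (nat \<Rightarrow> real) \<Rightarrow> real" where
  "meval f x = (\<Sum>\<alpha>\<in>Poly_Mapping.keys f. Poly_Mapping.lookup f \<alpha> * (\<Prod>i\<in>Poly_Mapping.keys \<alpha>. x i ^ Poly_Mapping.lookup \<alpha> i))"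

definition mconst :: "real \<Rightarrow> mpoly" where
  "mconst r = Poly_Mapping.single 0 r"

definition f_star :: "nat \<Rightarrow> mpoly \<Rightarrow> ereal" where
  "f_star n f = Inf ((\<lambda>x. ereal (meval f x)) ` {x. \<forall>i\<ge>n. x i = 0})"

definition is_sos :: "nat \<Rightarrow> mpoly \<Rightarrow> bool" where
  "is_sos n p \<longleftrightarrow> (\<exists>qs. (\<forall>q\<in>set qs. in_vars n q) \<and> p = sum_list (map (\<lambda>q. q * q) qs))"

definition f_sos :: "nat \<Rightarrow> mpoly \<Rightarrow> ereal" where
  "f_sos n f = Sup (ereal ` {r. is_sos n (f - mconst r)})"

definition Omega :: "nat \<Rightarrow> nat \<Rightarrow> mpoly \<Rightarrow> (nat \<Rightarrow>\<^sub>0 nat) set" where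
  "Omega n d f = {\<alpha>\<in>Poly_Mapping.keys f. \<alpha> \<noteq> 0 \<and> (\<forall>i<n. \<alpha> \<noteq> Poly_Mapping.single i (2*d))}"

definition Delta :: "nat \<Rightarrow> nat \<Rightarrow> mpoly \<Rightarrow> (nat \<Rightarrow>\<^sub>0 nat) set" where
  "Delta n d f = {\<alpha>\<in>Omega n d f. Poly_Mapping.lookup f \<alpha> < 0 \<or> (\<exists>i. odd (Poly_Mapping.lookup \<alpha> i))}"

definition apow :: "nat \<Rightarrow> (nat \<Rightarrow> real) \<Rightarrow> (nat \<Rightarrow>\<^sub>0 nat) \<Rightarrow> real" where
  "apow n a \<alpha> = (\<Prod>i<n. a i ^ Poly_Mapping.lookup \<alpha> i)"

definition gp_feasible :: "nat \<Rightarrow> nat \<Rightarrow> mpoly \<Rightarrow> real \<Rightarrow> bool" where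
  "gp_feasible n d f r \<longleftrightarrow>
    (\<exists>a :: (nat \<Rightarrow>\<^sub>0 nat) \<Rightarrow> nat \<Rightarrow> real.
      (\<forall>\<alpha>\<in>Delta n d f. \<forall>i<n. a \<alpha> i \<ge> 0 \<and> (a \<alpha> i = 0 \<longleftrightarrow> Poly_Mapping.lookup \<alpha> i = 0)) \<and>
      (\<forall>\<alpha>\<in>Delta n d f. mdeg \<alpha> = 2*d \<longrightarrow>
          (real (2*d)) ^ (2*d) * apow n (a \<alpha>) \<alpha> =
          \<bar>Poly_Mapping.lookup f \<alpha>\<bar> ^ (2*d) * apow n (\<lambda>i. real (Poly_Mapping.lookup \<alpha> i)) \<alpha>) \<and>
      (\<forall>i<n. Poly_Mapping.lookup f (Poly_Mapping.single i (2*d)) \<ge> (\<Sum>\<alpha>\<in>Delta n d f. a \<alpha> i)) \<and>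
      Poly_Mapping.lookup f 0 - r \<ge> (\<Sum>\<alpha>\<in>{\<alpha>\<in>Delta n d f. mdeg \<alpha> < 2*d}.
          real (2*d - mdeg \<alpha>) *
          ((\<bar>Poly_Mapping.lookup f \<alpha>\<bar> ^ (2*d) * apow n (\<lambda>i. real (Poly_Mapping.lookup \<alpha> i)) \<alpha>) /
            ((real (2*d)) ^ (2*d) * apow n (a \<alpha>) \<alpha>)) powr (1 / real (2*d - mdeg \<alpha>))))"

definition f_gp :: "nat \<Rightarrow> nat \<Rightarrow> mpoly \<Rightarrow> ereal" where
  "f_gp n d f = Sup (ereal ` {r. gp_feasible n d f r})"

end

theory Submission
  imports Defs
begin



abbreviation lk where "lk \<equiv> Poly_Mapping.lookup"
abbreviation sng where "sng \<equiv> Poly_Mapping.single"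
abbreviation ks where "ks \<equiv> Poly_Mapping.keys"

definition mmono :: "(nat \<Rightarrow>\<^sub>0 nat) \<Rightarrow> (nat \<Rightarrow> real) \<Rightarrow> real" where
  "mmono \<beta> x = (\<Prod>i\<in>ks \<beta>. x i ^ lk \<beta> i)"

lemma mmono_superset:
  assumes "finite S" "ks \<beta> \<subseteq> S"
  shows "mmono \<beta> x = (\<Prod>i\<in>S. x i ^ lk \<beta> i)"
  unfolding mmono_def
  by (rule prod.mono_neutral_left) (use assms in \<open>auto simp: in_keys_iff\<close>)

lemma mmono_add: "mmono (\<beta> + \<gamma>) x = mmono \<beta> x * mmono \<gamma> x"
proof -
  let ?S = "ks \<beta> \<union> ks \<gamma>"
  have "mmono (\<beta> + \<gamma>) x = (\<Prod>i\<in>?S. x i ^ lk (\<beta>+\<gamma>) i)"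
    by (rule mmono_superset) (auto dest: subsetD[OF keys_add])
  also have "\<dots> = (\<Prod>i\<in>?S. x i ^ lk \<beta> i * x i ^ lk \<gamma> i)"
    by (simp add: lookup_add power_add)
  also have "\<dots> = mmono \<beta> x * mmono \<gamma> x"
    by (simp add: prod.distrib mmono_superset[of ?S])
  finally show ?thesis .
qed

lemma mmono_zero [simp]: "mmono 0 x = 1" by (simp add: mmono_def)

lemma meval_superset:
  assumes "finite S" "ks p \<subseteq> S"
  shows "meval p x = (\<Sum>\<beta>\<in>S. lk p \<beta> * mmono \<beta> x)"
  unfolding meval_def mmono_def[symmetric]
  by (rule sum.mono_neutral_left) (use assms in \<open>auto simp: in_keys_iff\<close>)

lemma meval_add: "meval (p + q) x = meval p x + meval q x"
proof -
  let ?S = "ks p \<union> ks q"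
  have "meval (p + q) x = (\<Sum>\<beta>\<in>?S. lk (p+q) \<beta> * mmono \<beta> x)"
    by (rule meval_superset) (auto dest: subsetD[OF keys_add])
  also have "\<dots> = meval p x + meval q x"
    by (simp add: lookup_add algebra_simps sum.distrib meval_superset[of ?S])
  finally show ?thesis .
qed

lemma meval_uminus: "meval (- p) x = - meval p x"
  by (simp add: meval_def sum_negf)

lemma meval_diff: "meval (p - q) x = meval p x - meval q x"
  using meval_add[of p "-q" x] by (simp add: meval_uminus)

lemma meval_zero [simp]: "meval 0 x = 0" by (simp add: meval_def)

lemma meval_single: "meval (sng \<beta> c) x = c * mmono \<beta> x"
  by (subst meval_superset[of "{\<beta>}"]) auto

lemma meval_sum: "meval (\<Sum>i\<in>A. p i) x = (\<Sum>i\<in>A. meval (p i) x)"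
  by (induction A rule: infinite_finite_induct) (auto simp: meval_add)

lemma poly_expand: "p = (\<Sum>\<beta>\<in>ks p. sng \<beta> (lk p \<beta>))"
proof (rule poly_mapping_eqI)
  fix k
  show "lk p k = lk (\<Sum>\<beta>\<in>ks p. sng \<beta> (lk p \<beta>)) k"
    by (auto simp: lookup_sum lookup_single when_def in_keys_iff)
qed

lemma meval_mult: "meval (p * q) x = meval p x * meval q x"
proof -
  have "p * q = (\<Sum>\<beta>\<in>ks p. sng \<beta> (lk p \<beta>)) * (\<Sum>\<gamma>\<in>ks q. sng \<gamma> (lk q \<gamma>))"
    using poly_expand[of p] poly_expand[of q] by simp
  also have "\<dots> = (\<Sum>\<beta>\<in>ks p. \<Sum>\<gamma>\<in>ks q. sng (\<beta>+\<gamma>) (lk p \<beta> * lk q \<gamma>))"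
    by (simp add: sum_product mult_single)
  finally have "meval (p*q) x = (\<Sum>\<beta>\<in>ks p. \<Sum>\<gamma>\<in>ks q. lk p \<beta> * mmono \<beta> x * (lk q \<gamma> * mmono \<gamma> x))"
    by (simp add: meval_sum meval_single mmono_add mult_ac)
  also have "\<dots> = meval p x * meval q x"
    by (simp add: meval_def mmono_def sum_product)
  finally show ?thesis .
qed

lemma meval_mconst [simp]: "meval (mconst c) x = c"
  by (simp add: mconst_def meval_single)

lemma meval_one [simp]: "meval 1 x = 1"
  using meval_mconst[of 1 x] by (simp add: mconst_def)

lemma meval_power: "meval (p ^ k) x = meval p x ^ k"
  by (induction k) (auto simp: meval_mult)

lemma meval_prod: "meval (\<Prod>i\<in>A. p i) x = (\<Prod>i\<in>A. meval (p i) x)"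
  by (induction A rule: infinite_finite_induct) (auto simp: meval_mult)




lemma in_vars_zero [simp]: "in_vars n 0" by (simp add: in_vars_def)
lemma in_vars_single: "ks \<beta> \<subseteq> {..<n} \<Longrightarrow> in_vars n (sng \<beta> c)"
  by (simp add: in_vars_def)
lemma in_vars_mconst [simp]: "in_vars n (mconst c)" by (simp add: in_vars_def mconst_def)
lemma in_vars_one [simp]: "in_vars n 1" using in_vars_mconst[of n 1] by (simp add: mconst_def)
lemma in_vars_add: "in_vars n p \<Longrightarrow> in_vars n q \<Longrightarrow> in_vars n (p + q)"
proof -
  assume p: "in_vars n p" and q: "in_vars n q"
  show ?thesis unfolding in_vars_def
  proof
    fix \<gamma> assume "\<gamma> \<in> ks (p + q)"
    then have "\<gamma> \<in> ks p \<or> \<gamma> \<in> ks q" using keys_add[of p q] by auto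
    then show "ks \<gamma> \<subseteq> {..<n}" using p q unfolding in_vars_def by auto
  qed
qed
lemma in_vars_uminus: "in_vars n p \<Longrightarrow> in_vars n (- p)"
  unfolding in_vars_def by (simp add: in_keys_iff)
lemma in_vars_diff: "in_vars n p \<Longrightarrow> in_vars n q \<Longrightarrow> in_vars n (p - q)"
  using in_vars_add[of n p "-q"] in_vars_uminus[of n q] by simp
lemma in_vars_mult: "in_vars n p \<Longrightarrow> in_vars n q \<Longrightarrow> in_vars n (p * q)"
proof -
  assume p: "in_vars n p" and q: "in_vars n q"
  show ?thesis unfolding in_vars_def
  proof
    fix \<gamma> assume "\<gamma> \<in> ks (p * q)"
    then obtain a b where "\<gamma> = a + b" "a \<in> ks p" "b \<in> ks q" using keys_mult by blast
    moreover have "ks a \<subseteq> {..<n}" "ks b \<subseteq> {..<n}" using p q \<open>a \<in> ks p\<close> \<open>b \<in> ks q\<close> unfolding in_vars_def by auto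
    ultimately show "ks \<gamma> \<subseteq> {..<n}" using keys_add[of a b] by auto
  qed
qed
lemma in_vars_power: "in_vars n p \<Longrightarrow> in_vars n (p ^ k)"
  by (induction k) (simp_all add: in_vars_mult)
lemma in_vars_sum: "(\<And>i. i \<in> A \<Longrightarrow> in_vars n (p i)) \<Longrightarrow> in_vars n (\<Sum>i\<in>A. p i)"
  by (induction A rule: infinite_finite_induct) (simp_all add: in_vars_add)
lemma in_vars_prod: "(\<And>i. i \<in> A \<Longrightarrow> in_vars n (p i)) \<Longrightarrow> in_vars n (\<Prod>i\<in>A. p i)"
  by (induction A rule: infinite_finite_induct) (simp_all add: in_vars_mult)

definition V :: "nat \<Rightarrow> mpoly" where "V i = sng (sng i 1) 1"

lemma in_vars_V: "i < n \<Longrightarrow> in_vars n (V i)"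
  unfolding V_def by (rule in_vars_single) auto

lemma mconst_mult: "mconst a * mconst b = mconst (a * b)"
  by (simp add: mconst_def mult_single)
lemma mconst_add: "mconst a + mconst b = mconst (a + b)"
  by (simp add: mconst_def single_add)
lemma mconst_diff: "mconst a - mconst b = mconst (a - b)"
  by (simp add: mconst_def single_diff)
lemma mconst_power: "mconst a ^ k = mconst (a ^ k)"
  by (induction k) (auto simp: mconst_mult, simp add: mconst_def)
lemma mconst_1: "mconst 1 = 1" by (simp add: mconst_def)
lemma mconst_0: "mconst 0 = 0" by (simp add: mconst_def)
lemma of_nat_mconst: "(of_nat k :: mpoly) = mconst (real k)"
  unfolding mconst_def by (rule single_of_nat[symmetric])

lemma sos_zero: "is_sos n 0"
  unfolding is_sos_def by (rule exI[of _ "[]"]) simp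
lemma sos_sq: "in_vars n q \<Longrightarrow> is_sos n (q * q)"
  unfolding is_sos_def by (rule exI[of _ "[q]"]) simp
lemma sos_add: "is_sos n p \<Longrightarrow> is_sos n q \<Longrightarrow> is_sos n (p + q)"
  unfolding is_sos_def
proof (elim exE conjE)
  fix ps qs assume "\<forall>q\<in>set ps. in_vars n q" "p = sum_list (map (\<lambda>q. q * q) ps)"
    "\<forall>q\<in>set qs. in_vars n q" "q = sum_list (map (\<lambda>q. q * q) qs)"
  then show "\<exists>qs. (\<forall>q\<in>set qs. in_vars n q) \<and> p + q = sum_list (map (\<lambda>q. q * q) qs)"
    by (intro exI[of _ "ps @ qs"]) auto
qed
lemma sos_sum: "(\<And>i. i \<in> A \<Longrightarrow> is_sos n (p i)) \<Longrightarrow> is_sos n (\<Sum>i\<in>A. p i)"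
  by (induction A rule: infinite_finite_induct) (auto intro: sos_add sos_zero)
lemma sos_mult_sq: "in_vars n w \<Longrightarrow> is_sos n p \<Longrightarrow> is_sos n (w * w * p)"
  unfolding is_sos_def
proof (elim exE conjE)
  fix ps assume w: "in_vars n w" and "\<forall>q\<in>set ps. in_vars n q" "p = sum_list (map (\<lambda>q. q * q) ps)"
  then show "\<exists>qs. (\<forall>q\<in>set qs. in_vars n q) \<and> w * w * p = sum_list (map (\<lambda>q. q * q) qs)"
    by (intro exI[of _ "map (\<lambda>q. w * q) ps"])
       (simp add: in_vars_mult sum_list_const_mult[symmetric] o_def mult_ac)
qed
lemma sos_scale: "c \<ge> 0 \<Longrightarrow> is_sos n p \<Longrightarrow> is_sos n (mconst c * p)"
  using sos_mult_sq[of n "mconst (sqrt c)" p] by (simp add: mconst_mult)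
lemma sos_const: "c \<ge> 0 \<Longrightarrow> is_sos n (mconst c)"
  using sos_scale[of c n 1] sos_sq[of n 1] by simp
lemma sos_nat: "is_sos n p \<Longrightarrow> is_sos n (of_nat k * p)"
  by (simp add: of_nat_mconst sos_scale)

lemma sos_nonneg: "is_sos n p \<Longrightarrow> meval p x \<ge> 0"
  unfolding is_sos_def
proof (elim exE conjE)
  fix qs assume "p = sum_list (map (\<lambda>q. q * q) qs)"
  then show "meval p x \<ge> 0"
  proof (induction qs arbitrary: p)
    case Nil then show ?case by simp
  next
    case (Cons q qs)
    then show ?case by (simp add: meval_add meval_mult)
  qed
qed




definition Bf :: "nat \<Rightarrow> 'a::comm_ring_1 \<Rightarrow> 'a \<Rightarrow> 'a" where
  "Bf N s u = of_nat N * s ^ (N+1) - of_nat (N+1) * s ^ N * u + u ^ (N+1)"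

lemma Bf_0: "Bf 0 s u = 0" by (simp add: Bf_def)

lemma Bf_Suc: "Bf (Suc N) s u = u * Bf N s u + of_nat (N+1) * s ^ N * ((s - u) * (s - u))"
  by (simp add: Bf_def algebra_simps)

lemma sos_Bf:
  assumes "in_vars n a" "in_vars n b"
  shows "is_sos n (Bf N (a*a) (b*b))"
proof (induction N)
  case 0 then show ?case by (simp add: Bf_0 sos_zero)
next
  case (Suc N)
  have e: "Bf (Suc N) (a*a) (b*b) = b * b * Bf N (a*a) (b*b) +
      of_nat (N+1) * ((a^N * (a*a - b*b)) * (a^N * (a*a - b*b)))"
    by (simp add: Bf_Suc power_mult_distrib algebra_simps)
  show ?case unfolding e
    by (intro sos_add sos_mult_sq sos_nat sos_sq Suc assms in_vars_mult in_vars_power in_vars_diff)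
qed




definition SH :: "nat set \<Rightarrow> (nat \<Rightarrow> nat) \<Rightarrow> (nat \<Rightarrow> mpoly) \<Rightarrow> nat \<Rightarrow> mpoly" where
  "SH I g t N = (\<Sum>i\<in>I. of_nat (g i) * t i ^ N) - of_nat N * (\<Prod>i\<in>I. t i ^ g i)"

lemma sum_remove_j:
  assumes "finite I" "j \<in> I" "g j > 0"
  shows "(\<Sum>i\<in>I. of_nat (g i) * (t i :: mpoly) ^ M) =
         (\<Sum>i\<in>I. of_nat ((g(j := g j - 1)) i) * t i ^ M) + t j ^ M"
proof -
  have "(\<Sum>i\<in>I. of_nat (g i) * t i ^ M) = of_nat (g j) * t j ^ M + (\<Sum>i\<in>I-{j}. of_nat (g i) * t i ^ M)"
    using assms by (simp add: sum.remove)
  moreover have "(\<Sum>i\<in>I. of_nat ((g(j := g j - 1)) i) * t i ^ M) =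
      of_nat (g j - 1) * t j ^ M + (\<Sum>i\<in>I-{j}. of_nat (g i) * t i ^ M)"
    using assms by (simp add: sum.remove)
  moreover have "(of_nat (g j) :: mpoly) = of_nat (g j - 1) + 1"
    using assms by (simp add: of_nat_diff)
  ultimately show ?thesis by (simp add: algebra_simps)
qed

lemma prod_remove_j:
  assumes "finite I" "j \<in> I" "g j > 0"
  shows "(\<Prod>i\<in>I. (t i :: mpoly) ^ g i) = t j * (\<Prod>i\<in>I. t i ^ (g(j := g j - 1)) i)"
proof -
  have "(\<Prod>i\<in>I. t i ^ g i) = t j ^ g j * (\<Prod>i\<in>I-{j}. t i ^ g i)"
    using assms by (simp add: prod.remove)
  moreover have "(\<Prod>i\<in>I. t i ^ (g(j := g j - 1)) i) = t j ^ (g j - 1) * (\<Prod>i\<in>I-{j}. t i ^ g i)"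
    using assms by (simp add: prod.remove)
  moreover have "t j ^ g j = t j * t j ^ (g j - 1)"
    using assms by (metis Suc_diff_1 power_Suc)
  ultimately show ?thesis by (simp add: algebra_simps)
qed

lemma sum_remove_j_nat:
  assumes "finite I" "j \<in> I" "g j > 0"
  shows "sum g I = Suc (sum (g(j := g j - 1)) I)"
proof -
  have "sum g I = g j + sum g (I - {j})" using assms by (simp add: sum.remove)
  moreover have "sum (g(j := g j - 1)) I = (g j - 1) + sum g (I - {j})" using assms by (simp add: sum.remove)
  ultimately show ?thesis using assms by simp
qed

lemma SH_sos:
  assumes I: "finite I" and w: "\<And>i. i \<in> I \<Longrightarrow> in_vars n (w i)"
  shows "sum g I = N \<Longrightarrow> is_sos n (SH I g (\<lambda>i. w i * w i) N)"
proof (induction N arbitrary: g)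
  case 0
  then have "\<forall>i\<in>I. g i = 0" using I by simp
  then show ?case by (simp add: SH_def sos_zero)
next
  case (Suc M)
  then obtain j where j: "j \<in> I" "g j > 0"
    by (metis Zero_neq_Suc sum.neutral neq0_conv)
  define g0 where "g0 = g(j := g j - 1)"
  define t where "t = (\<lambda>i. w i * w i)"
  have sM: "sum g0 I = M" using sum_remove_j_nat[of I j g, OF I j] Suc.prems by (simp add: g0_def)
  have s1: "(\<Sum>i\<in>I. of_nat (g i) * t i ^ Suc M) = (\<Sum>i\<in>I. of_nat (g0 i) * t i ^ Suc M) + t j ^ Suc M"
    unfolding g0_def by (rule sum_remove_j[of I j g, OF I j])
  have p1: "(\<Prod>i\<in>I. t i ^ g i) = t j * (\<Prod>i\<in>I. t i ^ g0 i)"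
    unfolding g0_def by (rule prod_remove_j[of I j g, OF I j])
  have Bsum: "(\<Sum>i\<in>I. of_nat (g0 i) * Bf M (t i) (t j)) =
      of_nat M * (\<Sum>i\<in>I. of_nat (g0 i) * t i ^ Suc M)
      - of_nat (M+1) * t j * (\<Sum>i\<in>I. of_nat (g0 i) * t i ^ M)
      + of_nat M * t j ^ Suc M"
  proof -
    have "(\<Sum>i\<in>I. of_nat (g0 i) * Bf M (t i) (t j)) =
      (\<Sum>i\<in>I. of_nat M * (of_nat (g0 i) * t i ^ Suc M)
       - of_nat (M+1) * t j * (of_nat (g0 i) * t i ^ M) + of_nat (g0 i) * t j ^ Suc M)"
      by (rule sum.cong) (auto simp: Bf_def algebra_simps)
    also have "\<dots> = of_nat M * (\<Sum>i\<in>I. of_nat (g0 i) * t i ^ Suc M)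
      - of_nat (M+1) * t j * (\<Sum>i\<in>I. of_nat (g0 i) * t i ^ M)
      + (\<Sum>i\<in>I. of_nat (g0 i)) * t j ^ Suc M"
      by (simp add: sum.distrib sum_subtractf sum_distrib_left sum_distrib_right)
    also have "(\<Sum>i\<in>I. (of_nat (g0 i) :: mpoly)) = of_nat M"
      using sM by (simp flip: of_nat_sum)
    finally show ?thesis .
  qed
  show ?case
  proof (cases "M = 0")
    case True
    then have "\<forall>i\<in>I. g0 i = 0" using sM I by simp
    then have "SH I g t (Suc M) = 0" using s1 p1 True by (simp add: SH_def)
    then show ?thesis by (simp add: t_def sos_zero)
  next
    case False
    have IH: "is_sos n (SH I g0 t M)" using Suc.IH[OF sM] by (simp add: t_def)
    have key: "of_nat M * SH I g t (Suc M) =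
        of_nat (M+1) * t j * SH I g0 t M + (\<Sum>i\<in>I. of_nat (g0 i) * Bf M (t i) (t j))"
      unfolding SH_def s1 p1 Bsum by (simp add: algebra_simps)
    have R: "is_sos n (of_nat (M+1) * t j * SH I g0 t M + (\<Sum>i\<in>I. of_nat (g0 i) * Bf M (t i) (t j)))"
    proof (intro sos_add sos_sum sos_nat)
      show "is_sos n (of_nat (M + 1) * t j * SH I g0 t M)"
        using sos_nat[OF sos_mult_sq[OF w[OF j(1)] IH], of "M+1"] by (simp add: t_def mult_ac)
      fix i assume "i \<in> I"
      then show "is_sos n (Bf M (t i) (t j))" unfolding t_def by (intro sos_Bf w j)
    qed
    have "SH I g t (Suc M) = mconst (1 / real M) * (of_nat M * SH I g t (Suc M))"
      using False by (simp add: of_nat_mconst mult.assoc[symmetric] mconst_mult mconst_1)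
    then have "SH I g t (Suc M) = mconst (1 / real M) * (of_nat (M+1) * t j * SH I g0 t M + (\<Sum>i\<in>I. of_nat (g0 i) * Bf M (t i) (t j)))"
      using key by simp
    then show ?thesis using sos_scale[OF _ R, of "1 / real M"] by (simp add: t_def)
  qed
qed




lemma split_exists:
  fixes g :: "nat \<Rightarrow> nat" and k :: nat
  assumes "finite I"
  shows "k \<le> sum g I \<Longrightarrow> \<exists>u. (\<forall>i. u i \<le> g i) \<and> sum u I = k"
proof (induction k)
  case 0 then show ?case by (intro exI[of _ "\<lambda>_. 0"]) simp
next
  case (Suc k)
  then obtain u where u: "\<forall>i. u i \<le> g i" "sum u I = k" by auto
  have "\<exists>j\<in>I. u j < g j"
  proof (rule ccontr)
    assume "\<not> ?thesis"
    then have "\<forall>j\<in>I. u j = g j" using u by (auto simp: not_less intro: antisym)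
    then have "sum u I = sum g I" by (intro sum.cong) auto
    then show False using Suc.prems u by simp
  qed
  then obtain j where j: "j \<in> I" "u j < g j" by auto
  define u' where "u' = u(j := Suc (u j))"
  have "sum u' I = Suc (sum u I)"
  proof -
    have "sum u' I = u' j + sum u' (I - {j})" using assms j by (simp add: sum.remove)
    moreover have "sum u I = u j + sum u (I - {j})" using assms j by (simp add: sum.remove)
    moreover have "sum u' (I - {j}) = sum u (I - {j})" by (rule sum.cong) (auto simp: u'_def)
    ultimately show ?thesis by (simp add: u'_def)
  qed
  moreover have "\<forall>i. u' i \<le> g i" using u j by (auto simp: u'_def)
  ultimately show ?case using u by auto
qed

lemma H_sos:
  assumes I: "finite I" and t: "\<And>i. i \<in> I \<Longrightarrow> in_vars n (t i)"
    and g: "sum g I = 2 * d" and d: "d \<ge> 1"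
  shows "is_sos n (SH I g t (2 * d))"
proof -
  obtain u where u: "\<forall>i. u i \<le> g i" "sum u I = d"
    using split_exists[OF I, of d g] g by auto
  define v where "v = (\<lambda>i. g i - u i)"
  have gv: "\<And>i. g i = u i + v i" using u by (simp add: v_def)
  have sv: "sum v I = d" using g u by (simp add: v_def sum_subtractf_nat)
  define P where "P = (\<Prod>i\<in>I. t i ^ u i)"
  define Q where "Q = (\<Prod>i\<in>I. t i ^ v i)"
  have e1: "\<And>w. (\<Prod>i\<in>I. (t i * t i) ^ w i) = (\<Prod>i\<in>I. t i ^ w i) * (\<Prod>i\<in>I. t i ^ w i)"
    by (simp add: power_mult_distrib prod.distrib)
  have e2: "(\<Prod>i\<in>I. t i ^ g i) = P * Q"
    by (simp add: P_def Q_def gv power_add prod.distrib)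
  have e3: "(\<Sum>i\<in>I. of_nat (g i) * t i ^ (2*d)) =
      (\<Sum>i\<in>I. of_nat (u i) * (t i * t i) ^ d) + (\<Sum>i\<in>I. of_nat (v i) * (t i * t i) ^ d)"
  proof -
    have "\<And>i. (t i * t i) ^ d = t i ^ (2*d)" by (simp add: power_mult_distrib power_add[symmetric] mult_2)
    then show ?thesis by (simp add: gv sum.distrib[symmetric] algebra_simps)
  qed
  have eq: "SH I g t (2*d) = SH I u (\<lambda>i. t i * t i) d + SH I v (\<lambda>i. t i * t i) d + of_nat d * ((P - Q) * (P - Q))"
    unfolding SH_def e3 e2 e1 P_def[symmetric] Q_def[symmetric]
    by (simp add: algebra_simps)
  show ?thesis unfolding eq
    by (intro sos_add sos_nat sos_sq SH_sos[OF I] u sv in_vars_mult in_vars_diff t)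
       (auto simp: P_def Q_def intro!: in_vars_prod in_vars_power t)
qed




lemma V_power: "V i ^ k = sng (sng i k) 1"
  by (induction k) (simp_all add: V_def mult_single single_add[symmetric] add.commute)

lemma prod_sng: "(\<Prod>i\<in>A. sng (sng i (g i)) (1::real)) = sng (\<Sum>i\<in>A. sng i (g i)) 1"
  by (induction A rule: infinite_finite_induct) (simp_all add: mult_single)

lemma sum_sng_expand:
  fixes \<alpha> :: "nat \<Rightarrow>\<^sub>0 nat"
  assumes "ks \<alpha> \<subseteq> {..<n}"
  shows "(\<Sum>i<n. sng i (lk \<alpha> i)) = \<alpha>"
proof (rule poly_mapping_eqI)
  fix k
  show "lk (\<Sum>i<n. sng i (lk \<alpha> i)) k = lk \<alpha> k"
  proof -
    have "lk (\<Sum>i<n. sng i (lk \<alpha> i)) k = (\<Sum>x<n. if x = k then lk \<alpha> x else 0)"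
      by (simp add: lookup_sum lookup_single when_def eq_commute)
    also have "\<dots> = (if k < n then lk \<alpha> k else 0)" by (subst sum.delta) auto
    also have "\<dots> = lk \<alpha> k" using assms by (auto simp: in_keys_iff)
    finally show ?thesis .
  qed
qed

lemma monomial_V:
  fixes \<alpha> :: "nat \<Rightarrow>\<^sub>0 nat"
  assumes "ks \<alpha> \<subseteq> {..<n}"
  shows "(\<Prod>i<n. V i ^ lk \<alpha> i) = sng \<alpha> 1"
  by (simp add: V_power prod_sng sum_sng_expand[OF assms])

lemma mconst_sng: "mconst c * sng \<beta> 1 = sng \<beta> c"
  by (simp add: mconst_def mult_single)

lemma mmono_single: "mmono (sng i k) x = x i ^ k"
  by (cases "k = 0") (simp_all add: mmono_def)

locale Fctx =
  fixes n d :: nat and f :: mpoly and \<alpha> :: "nat \<Rightarrow>\<^sub>0 nat"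
  assumes iv: "in_vars n f" and deg: "total_degree f = 2 * d" and d1: "d \<ge> 1"
    and Om: "Omega n d f = {\<alpha>}"
begin

definition "f0 = lk f 0"
definition "c i = lk f (sng i (2*d))"
definition "b = lk f \<alpha>"

lemma alpha_props: "\<alpha> \<in> ks f" "\<alpha> \<noteq> 0" "\<And>i. i < n \<Longrightarrow> \<alpha> \<noteq> sng i (2*d)"
  using Om unfolding Omega_def by blast+

lemma b_ne: "b \<noteq> 0" using alpha_props(1) by (simp add: b_def in_keys_iff)

lemma keys_alpha: "ks \<alpha> \<subseteq> {..<n}" using iv alpha_props(1) by (auto simp: in_vars_def)

lemma keys_f: "\<beta> \<in> ks f \<Longrightarrow> \<beta> = 0 \<or> \<beta> = \<alpha> \<or> (\<exists>i<n. \<beta> = sng i (2*d))"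
  using Om unfolding Omega_def by blast

lemma mdeg_alpha: "mdeg \<alpha> = (\<Sum>i<n. lk \<alpha> i)"
  unfolding mdeg_def by (rule sum.mono_neutral_left) (use keys_alpha in \<open>auto simp: in_keys_iff\<close>)

lemma mdeg_le: "mdeg \<alpha> \<le> 2 * d"
proof -
  have "f \<noteq> 0" using alpha_props(1) by auto
  then have "total_degree f = Max (mdeg ` ks f)" by (simp add: total_degree_def)
  moreover have "mdeg \<alpha> \<le> Max (mdeg ` ks f)" using alpha_props(1) by (intro Max_ge) auto
  ultimately show ?thesis using deg by simp
qed

lemma mdeg_pos: "mdeg \<alpha> > 0"
proof -
  obtain i where "i \<in> ks \<alpha>" using alpha_props(2) by (metis all_not_in_conv keys_eq_empty)
  then show ?thesis unfolding mdeg_def by (simp add: in_keys_iff sum_pos2[where i=i] )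
qed

lemma sng_inj: "sng (i::nat) (2*d) = sng j (2*d) \<longleftrightarrow> i = j"
proof
  assume "sng i (2*d) = sng j (2*d)"
  then have "lk (sng i (2*d)) i = lk (sng j (2*d)) i" by simp
  then show "i = j" using d1 by (auto simp: lookup_single when_def split: if_splits)
qed simp

lemma sng_ne0: "sng (i::nat) (2*d) \<noteq> 0"
proof
  assume "sng i (2*d) = 0"
  then have "lk (sng i (2*d)) i = lk 0 i" by simp
  then show False using d1 by simp
qed

lemma f_decomp: "f = sng 0 f0 + (\<Sum>i<n. sng (sng i (2*d)) (c i)) + sng \<alpha> b"
proof (rule poly_mapping_eqI)
  fix k
  have S: "lk (\<Sum>i<n. sng (sng i (2*d)) (c i)) k = (if \<exists>j<n. k = sng j (2*d) then lk f k else 0)"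
  proof (cases "\<exists>j<n. k = sng j (2*d)")
    case True
    then obtain j where j: "j < n" "k = sng j (2*d)" by auto
    have "lk (\<Sum>i<n. sng (sng i (2*d)) (c i)) k = (\<Sum>i<n. (c i when sng i (2*d) = k))"
      by (simp add: lookup_sum lookup_single)
    also have "\<dots> = (\<Sum>i\<in>{j}. (c i when sng i (2*d) = k))"
      by (rule sum.mono_neutral_right) (use j in \<open>auto simp: sng_inj\<close>)
    also have "\<dots> = lk f k" using j by (simp add: c_def)
    finally show ?thesis using True by simp
  next
    case False
    then show ?thesis by (auto simp: lookup_sum lookup_single when_def intro!: sum.neutral)
  qed
  show "lk f k = lk (sng 0 f0 + (\<Sum>i<n. sng (sng i (2*d)) (c i)) + sng \<alpha> b) k"
  proof -
    have n0: "\<not> (\<exists>j<n. 0 = sng j (2*d))" using sng_ne0 by metis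
    have na: "\<not> (\<exists>j<n. \<alpha> = sng j (2*d))" using alpha_props(3) by blast
    consider "k = 0" | "k = \<alpha>" | "\<exists>j<n. k = sng j (2*d)" | "k \<noteq> 0" "k \<noteq> \<alpha>" "\<not> (\<exists>j<n. k = sng j (2*d))"
      by blast
    then show ?thesis
    proof cases
      case 1 then show ?thesis using n0 alpha_props(2) S
        by (auto simp: lookup_add lookup_single f0_def)
    next
      case 2 then show ?thesis using na alpha_props(2) S
        by (auto simp: lookup_add lookup_single b_def)
    next
      case 3
      then have "k \<noteq> 0" "k \<noteq> \<alpha>" using sng_ne0 alpha_props(3) by auto
      then show ?thesis using 3 by (simp add: lookup_add S lookup_single when_def)
    next
      case 4
      then have "lk f k = 0" using keys_f[of k] by (auto simp: in_keys_iff)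
      then show ?thesis using 4 by (simp add: lookup_add S lookup_single when_def)
    qed
  qed
qed

lemma f_decomp_V: "f = mconst f0 + (\<Sum>i<n. mconst (c i) * V i ^ (2*d)) + mconst b * (\<Prod>i<n. V i ^ lk \<alpha> i)"
proof -
  have e: "\<And>i. mconst (c i) * V i ^ (2*d) = sng (sng i (2*d)) (c i)" by (simp add: V_power mconst_sng)
  show ?thesis
    by (subst f_decomp) (simp only: monomial_V[OF keys_alpha] mconst_sng e, simp add: mconst_def)
qed

lemma meval_f: "meval f x = f0 + (\<Sum>i<n. c i * x i ^ (2*d)) + b * (\<Prod>i<n. x i ^ lk \<alpha> i)"
  by (subst f_decomp) (simp add: meval_add meval_sum meval_single mmono_single
        mmono_superset[OF _ keys_alpha])

end



lemma sos_le_star: "f_sos n f \<le> f_star n f"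
  unfolding f_sos_def
proof (rule Sup_least)
  fix y assume "y \<in> ereal ` {r. is_sos n (f - mconst r)}"
  then obtain r where r: "y = ereal r" "is_sos n (f - mconst r)" by auto
  show "y \<le> f_star n f" unfolding f_star_def r(1)
  proof (rule Inf_greatest)
    fix z assume "z \<in> (\<lambda>x. ereal (meval f x)) ` {x. \<forall>i\<ge>n. x i = 0}"
    then obtain x where "z = ereal (meval f x)" by auto
    moreover have "meval (f - mconst r) x \<ge> 0" by (rule sos_nonneg[OF r(2)])
    ultimately show "ereal r \<le> z" by (simp add: meval_diff)
  qed
qed

lemma exists_t_neg:
  fixes c K :: real
  assumes "c < 0" "K \<ge> 0" "N \<ge> 1"
  shows "\<exists>t\<ge>1. c * t ^ N + K * t ^ (N - 1) < 0"
proof -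
  define t where "t = K / (-c) + 1"
  have t1: "t \<ge> 1" using assms by (simp add: t_def divide_nonneg_neg)
  have "c * t + K = c" using assms by (simp add: t_def field_simps)
  moreover have "c * t ^ N + K * t ^ (N - 1) = t ^ (N - 1) * (c * t + K)"
    using assms(3) by (cases N) (auto simp: algebra_simps)
  moreover have "t ^ (N - 1) > 0" using t1 by simp
  ultimately have "c * t ^ N + K * t ^ (N - 1) < 0" using assms(1) by (simp add: mult_pos_neg)
  then show ?thesis using t1 by blast
qed

context Fctx begin

definition "inDelta \<longleftrightarrow> b < 0 \<or> (\<exists>i. odd (lk \<alpha> i))"

lemma Delta_eq: "Delta n d f = (if inDelta then {\<alpha>} else {})"
  using Om unfolding Delta_def inDelta_def b_def by auto

lemma odd_idx: "odd (lk \<alpha> i) \<Longrightarrow> i < n"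
  using keys_alpha by (metis in_keys_iff lessThan_iff odd_pos neq0_conv subsetD)

lemma sign_vec:
  assumes "inDelta"
  shows "\<exists>\<epsilon>::nat\<Rightarrow>real. (\<forall>j. \<epsilon> j = 1 \<or> \<epsilon> j = -1) \<and> b * (\<Prod>j<n. \<epsilon> j ^ lk \<alpha> j) = - \<bar>b\<bar>"
proof (cases "b < 0")
  case True then show ?thesis by (intro exI[of _ "\<lambda>_. 1"]) simp
next
  case False
  then obtain i where i: "odd (lk \<alpha> i)" using assms by (auto simp: inDelta_def)
  have "i < n" by (rule odd_idx[OF i])
  have "(\<Prod>j<n. (if j = i then -1 else 1::real) ^ lk \<alpha> j) = (\<Prod>j<n. if j = i then (-1) ^ lk \<alpha> i else 1)"
    by (rule prod.cong) auto
  also have "\<dots> = -1" using \<open>i < n\<close> i by (simp add: prod.delta)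
  finally show ?thesis using False b_ne
    by (intro exI[of _ "\<lambda>j. if j = i then -1 else 1"]) auto
qed

lemma meval_eps:
  assumes e: "\<forall>j. \<epsilon> j = 1 \<or> \<epsilon> j = (-1::real)" and eb: "b * (\<Prod>j<n. \<epsilon> j ^ lk \<alpha> j) = - \<bar>b\<bar>"
  shows "meval f (\<lambda>j. if j < n then \<epsilon> j * y j else 0) =
     f0 + (\<Sum>j<n. c j * y j ^ (2*d)) - \<bar>b\<bar> * (\<Prod>j<n. y j ^ lk \<alpha> j)"
proof -
  have pw: "\<And>j. (\<epsilon> j * y j) ^ (2*d) = y j ^ (2*d)"
  proof -
    fix j have "\<epsilon> j ^ (2*d) = 1" using e[rule_format, of j] by (auto simp: power_mult)
    then show "(\<epsilon> j * y j) ^ (2*d) = y j ^ (2*d)" by (simp add: power_mult_distrib)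
  qed
  let ?x = "\<lambda>j. if j < n then \<epsilon> j * y j else 0"
  have s: "(\<Sum>j<n. c j * ?x j ^ (2*d)) = (\<Sum>j<n. c j * y j ^ (2*d))"
    by (rule sum.cong) (simp_all only: lessThan_iff if_True pw)
  have "(\<Prod>j<n. ?x j ^ lk \<alpha> j) = (\<Prod>j<n. \<epsilon> j ^ lk \<alpha> j * y j ^ lk \<alpha> j)"
    by (rule prod.cong) (simp_all add: power_mult_distrib)
  also have "\<dots> = (\<Prod>j<n. \<epsilon> j ^ lk \<alpha> j) * (\<Prod>j<n. y j ^ lk \<alpha> j)"
    by (simp add: prod.distrib)
  finally have p: "b * (\<Prod>j<n. ?x j ^ lk \<alpha> j) = - \<bar>b\<bar> * (\<Prod>j<n. y j ^ lk \<alpha> j)"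
    using eb by (simp add: mult.assoc[symmetric])
  show ?thesis unfolding meval_f s p by simp
qed

lemma S1:
  assumes Hr: "\<forall>x. (\<forall>i\<ge>n. x i = 0) \<longrightarrow> r \<le> meval f x"
  shows "r \<le> f0"
proof -
  obtain i where i: "i \<in> ks \<alpha>" using alpha_props(2) by (metis all_not_in_conv keys_eq_empty)
  then have "i < n" using keys_alpha by auto
  have z: "(\<Prod>j<n. (\<lambda>_. 0::real) j ^ lk \<alpha> j) = 0"
    using i \<open>i < n\<close> by (intro prod_zero) (auto simp: in_keys_iff intro!: bexI[of _ i])
  have "meval f (\<lambda>_. 0) = f0" unfolding meval_f z using d1 by (simp add: zero_power)
  moreover have "r \<le> meval f (\<lambda>_. 0)" using Hr by simp
  ultimately show ?thesis by simp
qed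

lemma S2:
  assumes Hr: "\<forall>x. (\<forall>i\<ge>n. x i = 0) \<longrightarrow> r \<le> meval f x" and i: "i < n"
  shows "c i \<ge> 0"
proof (rule ccontr)
  assume "\<not> c i \<ge> 0"
  then have ci: "c i < 0" by simp
  obtain t where t: "t \<ge> 1" "c i * t ^ (2*d) + (\<bar>b\<bar> + \<bar>f0 - r\<bar>) * t ^ (2*d - 1) < 0"
    using exists_t_neg[OF ci, of "\<bar>b\<bar> + \<bar>f0 - r\<bar>" "2*d"] d1 by auto
  define x where "x = (\<lambda>j. if j = i then t else (0::real))"
  have x0: "\<forall>j\<ge>n. x j = 0" using i by (auto simp: x_def)
  have sumx: "(\<Sum>j<n. c j * x j ^ (2*d)) = c i * t ^ (2*d)"
  proof -
    have "(\<Sum>j<n. c j * x j ^ (2*d)) = (\<Sum>j<n. if j = i then c i * t ^ (2*d) else 0)"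
      by (rule sum.cong) (use d1 in \<open>auto simp: x_def\<close>)
    then show ?thesis using i by (simp add: sum.delta)
  qed
  have P: "\<bar>\<Prod>j<n. x j ^ lk \<alpha> j\<bar> \<le> t ^ (2*d - 1)"
  proof (cases "\<exists>j<n. j \<noteq> i \<and> lk \<alpha> j > 0")
    case True
    then obtain j where "j < n" "j \<noteq> i" "lk \<alpha> j > 0" by auto
    then have z: "(\<Prod>j<n. x j ^ lk \<alpha> j) = 0"
      by (intro prod_zero) (auto simp: x_def intro!: bexI[of _ j])
    show ?thesis unfolding z using t(1) by simp
  next
    case False
    have "(\<Prod>j<n. x j ^ lk \<alpha> j) = (\<Prod>j<n. if j = i then t ^ lk \<alpha> i else 1)"
      by (rule prod.cong) (use False in \<open>auto simp: x_def\<close>)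
    also have "\<dots> = t ^ lk \<alpha> i" using i by (simp add: prod.delta)
    finally have e: "(\<Prod>j<n. x j ^ lk \<alpha> j) = t ^ lk \<alpha> i" .
    have "lk \<alpha> i \<noteq> 2*d"
    proof
      assume a: "lk \<alpha> i = 2*d"
      have "\<alpha> = sng i (2*d)"
      proof (rule poly_mapping_eqI)
        fix k show "lk \<alpha> k = lk (sng i (2*d)) k"
        proof (cases "k < n")
          case True then show ?thesis using False a by (cases "k = i") (auto simp: lookup_single)
        next
          case False then have "k \<notin> ks \<alpha>" using keys_alpha by auto
          then show ?thesis using False i by (auto simp: in_keys_iff lookup_single)
        qed
      qed
      then show False using alpha_props(3)[OF i] by simp
    qed
    moreover have "lk \<alpha> i \<le> 2*d"
    proof -
      have "lk \<alpha> i \<le> (\<Sum>j<n. lk \<alpha> j)" using i by (intro member_le_sum) auto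
      then show ?thesis using mdeg_le mdeg_alpha by simp
    qed
    ultimately have "lk \<alpha> i \<le> 2*d - 1" by simp
    then have "t ^ lk \<alpha> i \<le> t ^ (2*d - 1)" using t(1) by (intro power_increasing) auto
    then show ?thesis using e t(1) by simp
  qed
  have "meval f x = f0 + c i * t ^ (2*d) + b * (\<Prod>j<n. x j ^ lk \<alpha> j)"
    by (simp add: meval_f sumx)
  also have "\<dots> \<le> f0 + c i * t ^ (2*d) + \<bar>b\<bar> * t ^ (2*d - 1)"
  proof -
    have "b * (\<Prod>j<n. x j ^ lk \<alpha> j) \<le> \<bar>b\<bar> * \<bar>\<Prod>j<n. x j ^ lk \<alpha> j\<bar>"
      by (metis abs_ge_self abs_mult)
    also have "\<dots> \<le> \<bar>b\<bar> * t ^ (2*d - 1)" by (rule mult_left_mono[OF P]) simp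
    finally show ?thesis by simp
  qed
  also have "\<dots> < r"
  proof -
    have "f0 - r \<le> \<bar>f0 - r\<bar> * t ^ (2*d - 1)"
    proof -
      have "1 \<le> t ^ (2*d - 1)" using t(1) by (rule one_le_power)
      then have "\<bar>f0 - r\<bar> * 1 \<le> \<bar>f0 - r\<bar> * t ^ (2*d - 1)" by (intro mult_left_mono) auto
      moreover have "f0 - r \<le> \<bar>f0 - r\<bar>" by simp
      ultimately show ?thesis by (metis mult.right_neutral order_trans)
    qed
    then show ?thesis using t(2) by (simp add: algebra_simps)
  qed
  finally have "meval f x < r" .
  moreover have "r \<le> meval f x" using Hr x0 by blast
  ultimately show False by simp
qed

lemma S3:
  assumes Hr: "\<forall>x. (\<forall>i\<ge>n. x i = 0) \<longrightarrow> r \<le> meval f x" and iD: inDelta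
    and i: "i < n" "lk \<alpha> i > 0"
  shows "c i > 0"
proof (rule ccontr)
  assume "\<not> c i > 0"
  then have ci: "c i = 0" using S2[OF Hr i(1)] by simp
  obtain \<epsilon> where e: "\<forall>j. \<epsilon> j = 1 \<or> \<epsilon> j = (-1::real)" "b * (\<Prod>j<n. \<epsilon> j ^ lk \<alpha> j) = - \<bar>b\<bar>"
    using sign_vec[OF iD] by auto
  define C where "C = (\<Sum>j<n. c j * (if j = i then 0 else 1))"
  define t where "t = (\<bar>f0 + C - r\<bar> + 1) / \<bar>b\<bar> + 1"
  have bpos: "\<bar>b\<bar> > 0" using b_ne by simp
  have t1: "t \<ge> 1" using bpos by (simp add: t_def)
  define y where "y = (\<lambda>j. if j = i then t else (1::real))"
  have sy: "(\<Sum>j<n. c j * y j ^ (2*d)) = C"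
    unfolding C_def by (rule sum.cong) (auto simp: y_def ci)
  have py: "(\<Prod>j<n. y j ^ lk \<alpha> j) = t ^ lk \<alpha> i"
  proof -
    have "(\<Prod>j<n. y j ^ lk \<alpha> j) = (\<Prod>j<n. if j = i then t ^ lk \<alpha> i else 1)"
      by (rule prod.cong) (auto simp: y_def)
    then show ?thesis using i by (simp add: prod.delta)
  qed
  have "t \<le> t ^ lk \<alpha> i" using t1 i(2)
    by (metis One_nat_def Suc_leI power_increasing power_one_right)
  then have "\<bar>b\<bar> * t \<le> \<bar>b\<bar> * t ^ lk \<alpha> i" by (simp add: mult_left_mono)
  moreover have "\<bar>b\<bar> * t > \<bar>f0 + C - r\<bar>"
  proof -
    have q: "\<bar>b\<bar> * ((\<bar>f0 + C - r\<bar> + 1) / \<bar>b\<bar>) = \<bar>f0 + C - r\<bar> + 1"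
      using bpos by (simp del: abs_mult_self_eq)
    have "\<bar>b\<bar> * t = (\<bar>f0 + C - r\<bar> + 1) + \<bar>b\<bar>"
      unfolding t_def distrib_left q by simp
    then show ?thesis using bpos by linarith
  qed
  ultimately have "f0 + C - \<bar>b\<bar> * t ^ lk \<alpha> i < r" by linarith
  moreover have "meval f (\<lambda>j. if j < n then \<epsilon> j * y j else 0) = f0 + C - \<bar>b\<bar> * t ^ lk \<alpha> i"
    using meval_eps[OF e] sy py by simp
  moreover have "r \<le> meval f (\<lambda>j. if j < n then \<epsilon> j * y j else 0)"
    using Hr by simp
  ultimately show False by simp
qed

end



lemma root_pow:
  fixes x :: real
  assumes "x \<ge> 0" "N > 0"
  shows "(x powr (1 / real N)) ^ N = x"
proof (cases "x = 0")
  case True then show ?thesis using assms by simp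
next
  case False
  then have "(x powr (1 / real N)) ^ N = x powr (real N * (1 / real N))" by (simp add: powr_power)
  also have "\<dots> = x" using assms by simp
  finally show ?thesis .
qed

context Fctx begin

definition "PC = (\<Prod>j<n. c j ^ lk \<alpha> j)"
definition "Pal = (\<Prod>j<n. real (lk \<alpha> j) ^ lk \<alpha> j)"

lemma Pal_pos: "Pal > 0"
  unfolding Pal_def by (intro prod_pos) (auto simp: zero_power)

lemma PC_pos:
  assumes Hr: "\<forall>x. (\<forall>i\<ge>n. x i = 0) \<longrightarrow> r \<le> meval f x" and iD: inDelta
  shows "PC > 0"
  unfolding PC_def
proof (intro prod_pos)
  fix j assume "j \<in> {..<n}"
  then show "0 < c j ^ lk \<alpha> j" using S3[OF Hr iD, of j] by (cases "lk \<alpha> j = 0") auto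
qed

lemma sum_al: "(\<Sum>j<n. real (lk \<alpha> j)) = real (mdeg \<alpha>)"
  by (simp add: mdeg_alpha)

lemma Ycalc:
  assumes Hr: "\<forall>x. (\<forall>i\<ge>n. x i = 0) \<longrightarrow> r \<le> meval f x" and iD: inDelta and T: "T > 0"
  defines "y \<equiv> (\<lambda>j. (real (lk \<alpha> j) * T / c j) powr (1 / real (2*d)))"
  shows "r \<le> f0 + real (mdeg \<alpha>) * T - \<bar>b\<bar> * (\<Prod>j<n. y j ^ lk \<alpha> j)"
    and "(\<Prod>j<n. y j ^ lk \<alpha> j) ^ (2*d) = T ^ mdeg \<alpha> * Pal / PC"
    and "(\<Prod>j<n. y j ^ lk \<alpha> j) \<ge> 0"
proof -
  have D: "2*d > 0" using d1 by simp
  have yD: "\<And>j. j < n \<Longrightarrow> y j ^ (2*d) = real (lk \<alpha> j) * T / c j"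
  proof -
    fix j assume j: "j < n"
    show "y j ^ (2*d) = real (lk \<alpha> j) * T / c j"
    proof (cases "lk \<alpha> j = 0")
      case True then show ?thesis using D by (simp add: y_def)
    next
      case False
      then have "c j > 0" using S3[OF Hr iD j] by simp
      then show ?thesis unfolding y_def using T D by (intro root_pow) auto
    qed
  qed
  have cy: "\<And>j. j < n \<Longrightarrow> c j * y j ^ (2*d) = real (lk \<alpha> j) * T"
  proof -
    fix j assume j: "j < n"
    show "c j * y j ^ (2*d) = real (lk \<alpha> j) * T"
    proof (cases "lk \<alpha> j = 0")
      case True then show ?thesis using D yD[OF j] by simp
    next
      case False
      then have "c j > 0" using S3[OF Hr iD j] by simp
      then show ?thesis using yD[OF j] by simp
    qed
  qed
  obtain \<epsilon> where e: "\<forall>j. \<epsilon> j = 1 \<or> \<epsilon> j = (-1::real)" "b * (\<Prod>j<n. \<epsilon> j ^ lk \<alpha> j) = - \<bar>b\<bar>"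
    using sign_vec[OF iD] by auto
  have "(\<Sum>j<n. c j * y j ^ (2*d)) = (\<Sum>j<n. real (lk \<alpha> j) * T)"
    by (rule sum.cong) (auto simp: cy)
  also have "\<dots> = real (mdeg \<alpha>) * T" by (simp add: sum_distrib_right[symmetric] sum_al)
  finally have s: "(\<Sum>j<n. c j * y j ^ (2*d)) = real (mdeg \<alpha>) * T" .
  have "r \<le> meval f (\<lambda>j. if j < n then \<epsilon> j * y j else 0)" using Hr by simp
  then show "r \<le> f0 + real (mdeg \<alpha>) * T - \<bar>b\<bar> * (\<Prod>j<n. y j ^ lk \<alpha> j)"
    using meval_eps[OF e, of y] s by simp
  show "(\<Prod>j<n. y j ^ lk \<alpha> j) \<ge> 0" by (intro prod_nonneg) (simp add: y_def)
  have "(\<Prod>j<n. y j ^ lk \<alpha> j) ^ (2*d) = (\<Prod>j<n. (y j ^ (2*d)) ^ lk \<alpha> j)"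
    by (simp add: prod_power_distrib power_mult[symmetric] mult.commute)
  also have "\<dots> = (\<Prod>j<n. T ^ lk \<alpha> j * (real (lk \<alpha> j) ^ lk \<alpha> j / c j ^ lk \<alpha> j))"
    by (rule prod.cong) (auto simp: yD power_divide power_mult_distrib)
  also have "\<dots> = T ^ mdeg \<alpha> * Pal / PC"
    by (simp add: prod.distrib prod_dividef power_sum[symmetric] mdeg_alpha Pal_def PC_def)
  finally show "(\<Prod>j<n. y j ^ lk \<alpha> j) ^ (2*d) = T ^ mdeg \<alpha> * Pal / PC" .
qed

end



context Fctx begin

lemma S4:
  assumes Hr: "\<forall>x. (\<forall>i\<ge>n. x i = 0) \<longrightarrow> r \<le> meval f x" and iD: inDelta and m: "mdeg \<alpha> < 2*d"
  shows "f0 - r \<ge> real (2*d - mdeg \<alpha>) *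
     ((\<bar>b\<bar> ^ (2*d) * Pal) / (real (2*d) ^ (2*d) * PC)) powr (1 / real (2*d - mdeg \<alpha>))"
proof -
  define D where "D = 2*d"
  define R where "R = (\<bar>b\<bar> ^ D * Pal) / (real D ^ D * PC)"
  define T where "T = R powr (1 / real (D - mdeg \<alpha>))"
  have D0: "D > 0" using d1 by (simp add: D_def)
  have Rpos: "R > 0" using PC_pos[OF Hr iD] Pal_pos b_ne D0 by (simp add: R_def)
  have Tpos: "T > 0" using Rpos by (simp add: T_def)
  have TR: "T ^ (D - mdeg \<alpha>) = R" unfolding T_def using Rpos m by (intro root_pow) (auto simp: D_def)
  let ?y = "\<lambda>j. (real (lk \<alpha> j) * T / c j) powr (1 / real (2*d))"
  let ?Q = "\<Prod>j<n. ?y j ^ lk \<alpha> j"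
  note Y = Ycalc[OF Hr iD Tpos]
  have "(\<bar>b\<bar> * ?Q) ^ D = \<bar>b\<bar> ^ D * (T ^ mdeg \<alpha> * Pal / PC)"
    using Y(2) by (simp add: power_mult_distrib D_def)
  also have "\<dots> = real D ^ D * R * T ^ mdeg \<alpha>"
    using PC_pos[OF Hr iD] D0 by (simp add: R_def field_simps)
  also have "\<dots> = real D ^ D * T ^ (D - mdeg \<alpha>) * T ^ mdeg \<alpha>" by (simp add: TR)
  also have "\<dots> = (real D * T) ^ D"
  proof -
    have "D - mdeg \<alpha> + mdeg \<alpha> = D" using m by (simp add: D_def)
    then have "T ^ (D - mdeg \<alpha>) * T ^ mdeg \<alpha> = T ^ D" by (metis power_add)
    then show ?thesis by (simp only: power_mult_distrib mult.assoc)
  qed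
  finally have pe: "(\<bar>b\<bar> * ?Q) ^ D = (real D * T) ^ D" .
  have "\<bar>b\<bar> * ?Q = real D * T"
  proof (rule power_eq_imp_eq_base[OF pe])
    show "0 \<le> \<bar>b\<bar> * ?Q" using Y(3) by (rule mult_nonneg_nonneg[OF abs_ge_zero])
    show "0 \<le> real D * T" using Tpos by simp
    show "0 < D" by (rule D0)
  qed
  then have "r \<le> f0 + real (mdeg \<alpha>) * T - real D * T" using Y(1) by (simp add: D_def)
  moreover have "real (D - mdeg \<alpha>) = real D - real (mdeg \<alpha>)" using m by (simp add: D_def)
  ultimately have "f0 - r \<ge> real (D - mdeg \<alpha>) * T" by (simp add: algebra_simps)
  then show ?thesis by (simp add: T_def R_def D_def)
qed

lemma S5:
  assumes Hr: "\<forall>x. (\<forall>i\<ge>n. x i = 0) \<longrightarrow> r \<le> meval f x" and iD: inDelta and m: "mdeg \<alpha> = 2*d"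
  shows "\<exists>\<theta>. \<theta> > 0 \<and> \<theta> \<le> 1 \<and> real (2*d) ^ (2*d) * \<theta> ^ (2*d) * PC = \<bar>b\<bar> ^ (2*d) * Pal"
proof -
  define D where "D = 2*d"
  define \<rho> where "\<rho> = (\<bar>b\<bar> ^ D * Pal) / (real D ^ D * PC)"
  define \<theta> where "\<theta> = \<rho> powr (1 / real D)"
  have D0: "D > 0" using d1 by (simp add: D_def)
  have PCp: "PC > 0" by (rule PC_pos[OF Hr iD])
  have \<rho>pos: "\<rho> > 0" using PCp Pal_pos b_ne D0 by (simp add: \<rho>_def)
  have \<theta>pos: "\<theta> > 0" using \<rho>pos by (simp add: \<theta>_def)
  have \<theta>D: "\<theta> ^ D = \<rho>" unfolding \<theta>_def using \<rho>pos D0 by (intro root_pow) auto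
  have eq: "real D ^ D * \<theta> ^ D * PC = \<bar>b\<bar> ^ D * Pal"
    using PCp D0 by (simp add: \<theta>D \<rho>_def)
  have "\<theta> \<le> 1"
  proof (rule ccontr)
    assume "\<not> \<theta> \<le> 1"
    then have t1: "\<theta> > 1" by simp
    define T where "T = (\<bar>f0 - r\<bar> + 1) / (real D * (\<theta> - 1))"
    have Tpos: "T > 0" using t1 D0 by (simp add: T_def)
    let ?y = "\<lambda>j. (real (lk \<alpha> j) * T / c j) powr (1 / real (2*d))"
    let ?Q = "\<Prod>j<n. ?y j ^ lk \<alpha> j"
    note Y = Ycalc[OF Hr iD Tpos]
    have "(\<bar>b\<bar> * ?Q) ^ D = \<bar>b\<bar> ^ D * (T ^ D * Pal / PC)"
      using Y(2) m by (simp add: power_mult_distrib D_def)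
    also have "\<dots> = real D ^ D * \<rho> * T ^ D"
      using PCp D0 by (simp add: \<rho>_def field_simps)
    also have "\<dots> = (\<theta> * real D * T) ^ D" by (simp add: power_mult_distrib \<theta>D)
    finally have pe: "(\<bar>b\<bar> * ?Q) ^ D = (\<theta> * real D * T) ^ D" .
    have "\<bar>b\<bar> * ?Q = \<theta> * real D * T"
    proof (rule power_eq_imp_eq_base[OF pe])
      show "0 \<le> \<bar>b\<bar> * ?Q" using Y(3) by (rule mult_nonneg_nonneg[OF abs_ge_zero])
      show "0 \<le> \<theta> * real D * T" using Tpos \<theta>pos by simp
      show "0 < D" by (rule D0)
    qed
    then have "r \<le> f0 + real D * T - \<theta> * real D * T" using Y(1) m by (simp add: D_def)
    moreover have "real D * T * (\<theta> - 1) = \<bar>f0 - r\<bar> + 1"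
      using t1 D0 by (simp add: T_def)
    ultimately show False by (simp add: algebra_simps)
  qed
  then show ?thesis using \<theta>pos eq by (auto simp: D_def)
qed

end



lemma sum_filter_single: "(\<Sum>\<beta>\<in>{\<beta>\<in>{a}. P \<beta>}. g \<beta>) = (if P a then g a else 0)"
proof (cases "P a")
  case True
  then have "{\<beta>\<in>{a}. P \<beta>} = {a}" by auto
  then show ?thesis using True by simp
next
  case False
  then have e: "{\<beta>\<in>{a}. P \<beta>} = {}" by auto
  show ?thesis by (simp only: e sum.empty if_not_P[OF False])
qed

context Fctx begin

lemma gp_of_bound:
  assumes Hr: "\<forall>x. (\<forall>i\<ge>n. x i = 0) \<longrightarrow> r \<le> meval f x"
  shows "gp_feasible n d f r"
proof (cases inDelta)
  case False
  show ?thesis using S1[OF Hr] S2[OF Hr] False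
    unfolding gp_feasible_def Delta_eq by (simp add: c_def f0_def)
next
  case True
  note iD = True
  show ?thesis
  proof (cases "mdeg \<alpha> < 2*d")
    case m: True
    define a where "a = (\<lambda>(\<beta>::nat\<Rightarrow>\<^sub>0nat) j. if lk \<alpha> j = 0 then 0 else c j)"
    have PA: "apow n (a \<alpha>) \<alpha> = PC"
      unfolding apow_def PC_def by (rule prod.cong) (auto simp: a_def)
    have PL: "apow n (\<lambda>i. real (lk \<alpha> i)) \<alpha> = Pal" by (simp add: apow_def Pal_def)
    have c1: "\<forall>j<n. a \<alpha> j \<ge> 0 \<and> (a \<alpha> j = 0 \<longleftrightarrow> lk \<alpha> j = 0)"
    proof (intro allI impI)
      fix j assume j: "j < n"
      show "a \<alpha> j \<ge> 0 \<and> (a \<alpha> j = 0 \<longleftrightarrow> lk \<alpha> j = 0)"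
        using S3[OF Hr iD j] by (cases "lk \<alpha> j = 0") (auto simp: a_def)
    qed
    have c3: "\<forall>i<n. c i \<ge> a \<alpha> i" using S2[OF Hr] by (auto simp: a_def)
    have c4: "f0 - r \<ge> real (2*d - mdeg \<alpha>) *
        ((\<bar>b\<bar> ^ (2*d) * apow n (\<lambda>i. real (lk \<alpha> i)) \<alpha>) / (real (2*d) ^ (2*d) * apow n (a \<alpha>) \<alpha>))
          powr (1 / real (2*d - mdeg \<alpha>))"
      unfolding PA PL by (rule S4[OF Hr iD m])
    show ?thesis unfolding gp_feasible_def Delta_eq if_P[OF iD] sum_filter_single
      apply (rule exI[of _ a])
      using c1 c3 c4 m by (simp add: sum_filter_single c_def[symmetric] f0_def[symmetric] b_def[symmetric])
  next
    case m: False
    then have mD: "mdeg \<alpha> = 2*d" using mdeg_le by simp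
    obtain \<theta> where th: "\<theta> > 0" "\<theta> \<le> 1" "real (2*d) ^ (2*d) * \<theta> ^ (2*d) * PC = \<bar>b\<bar> ^ (2*d) * Pal"
      using S5[OF Hr iD mD] by auto
    define a where "a = (\<lambda>(\<beta>::nat\<Rightarrow>\<^sub>0nat) j. if lk \<alpha> j = 0 then 0 else \<theta> * c j)"
    have "apow n (a \<alpha>) \<alpha> = (\<Prod>j<n. \<theta> ^ lk \<alpha> j * c j ^ lk \<alpha> j)"
      unfolding apow_def by (rule prod.cong) (auto simp: a_def power_mult_distrib)
    also have "\<dots> = \<theta> ^ (2*d) * PC"
      by (simp add: prod.distrib power_sum[symmetric] PC_def mdeg_alpha[symmetric] mD)
    finally have PA: "apow n (a \<alpha>) \<alpha> = \<theta> ^ (2*d) * PC" .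
    have PL: "apow n (\<lambda>i. real (lk \<alpha> i)) \<alpha> = Pal" by (simp add: apow_def Pal_def)
    have c1: "\<forall>j<n. a \<alpha> j \<ge> 0 \<and> (a \<alpha> j = 0 \<longleftrightarrow> lk \<alpha> j = 0)"
    proof (intro allI impI)
      fix j assume j: "j < n"
      show "a \<alpha> j \<ge> 0 \<and> (a \<alpha> j = 0 \<longleftrightarrow> lk \<alpha> j = 0)"
        using S3[OF Hr iD j] th(1) by (cases "lk \<alpha> j = 0") (auto simp: a_def)
    qed
    have c2: "real (2*d) ^ (2*d) * apow n (a \<alpha>) \<alpha> = \<bar>b\<bar> ^ (2*d) * apow n (\<lambda>i. real (lk \<alpha> i)) \<alpha>"
      unfolding PA PL using th(3) by (simp add: mult.assoc)
    have c3: "\<forall>i<n. c i \<ge> a \<alpha> i"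
    proof (intro allI impI)
      fix i assume i: "i < n"
      have "\<theta> * c i \<le> 1 * c i" using th(2) S2[OF Hr i] by (intro mult_right_mono) auto
      then show "c i \<ge> a \<alpha> i" using S2[OF Hr i] by (auto simp: a_def)
    qed
    have c4: "f0 - r \<ge> 0" using S1[OF Hr] by simp
    show ?thesis unfolding gp_feasible_def Delta_eq if_P[OF iD] sum_filter_single
      apply (rule exI[of _ a])
      using c1 c2 c3 c4 m by (simp add: sum_filter_single c_def[symmetric] f0_def[symmetric] b_def[symmetric])
  qed
qed

end



context Fctx begin

lemma V_sq: "V i ^ (2*d) = V i ^ d * V i ^ d"
  by (simp add: mult_2 power_add)

lemma sos_cV: "c' \<ge> 0 \<Longrightarrow> i < n \<Longrightarrow> is_sos n (mconst c' * V i ^ (2*d))"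
  unfolding V_sq by (intro sos_scale sos_sq in_vars_power in_vars_V)

lemma sos_of_gp_noD:
  assumes gp: "gp_feasible n d f r" and nD: "\<not> inDelta"
  shows "is_sos n (f - mconst r)"
proof -
  have cf: "(\<forall>i<n. c i \<ge> 0) \<and> r \<le> f0"
    using gp unfolding gp_feasible_def Delta_eq if_not_P[OF nD] by (simp add: c_def f0_def)
  have bpos: "b > 0" using nD b_ne by (auto simp: inDelta_def)
  have ev: "\<And>j. even (lk \<alpha> j)" using nD by (auto simp: inDelta_def)
  define M where "M = (\<Prod>i<n. V i ^ (lk \<alpha> i div 2))"
  have MM: "(\<Prod>i<n. V i ^ lk \<alpha> i) = M * M"
  proof -
    have "(\<Prod>i<n. V i ^ lk \<alpha> i) = (\<Prod>i<n. V i ^ (lk \<alpha> i div 2) * V i ^ (lk \<alpha> i div 2))"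
    proof (rule prod.cong)
      fix i
      have "lk \<alpha> i = lk \<alpha> i div 2 + lk \<alpha> i div 2" using ev[of i] by auto
      then show "V i ^ lk \<alpha> i = V i ^ (lk \<alpha> i div 2) * V i ^ (lk \<alpha> i div 2)"
        by (metis power_add)
    qed simp
    then show ?thesis by (simp add: prod.distrib M_def)
  qed
  have e: "f - mconst r = mconst (f0 - r) + (\<Sum>i<n. mconst (c i) * V i ^ (2*d)) + mconst b * (M * M)"
    by (subst f_decomp_V) (simp add: MM mconst_diff[symmetric] algebra_simps)
  have Min: "in_vars n M" unfolding M_def by (intro in_vars_prod in_vars_power in_vars_V) auto
  show ?thesis unfolding e
    by (intro sos_add sos_const sos_sum sos_cV sos_scale sos_sq Min)
       (use cf bpos in auto)
qed

end



context Fctx begin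

lemma atMost_split: "{..n} = insert n {..<n}" by auto

lemma sos_of_gp_D:
  assumes gp: "gp_feasible n d f r" and iD: inDelta
  shows "is_sos n (f - mconst r)"
proof -
  from gp obtain a where
    a1: "\<forall>i<n. a \<alpha> i \<ge> 0 \<and> (a \<alpha> i = 0 \<longleftrightarrow> lk \<alpha> i = 0)" and
    a2: "mdeg \<alpha> = 2*d \<longrightarrow> real (2*d) ^ (2*d) * apow n (a \<alpha>) \<alpha> = \<bar>lk f \<alpha>\<bar> ^ (2*d) * apow n (\<lambda>i. real (lk \<alpha> i)) \<alpha>" and
    a3: "\<forall>i<n. lk f (sng i (2*d)) \<ge> a \<alpha> i" and
    a4: "lk f 0 - r \<ge> (if mdeg \<alpha> < 2*d then real (2*d - mdeg \<alpha>) *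
          ((\<bar>lk f \<alpha>\<bar> ^ (2*d) * apow n (\<lambda>i. real (lk \<alpha> i)) \<alpha>) /
            ((real (2*d)) ^ (2*d) * apow n (a \<alpha>) \<alpha>)) powr (1 / real (2*d - mdeg \<alpha>)) else 0)"
    unfolding gp_feasible_def Delta_eq if_P[OF iD] sum_filter_single by auto
  define A where "A = a \<alpha>"
  define m where "m = mdeg \<alpha>"
  define PA where "PA = (\<Prod>j<n. A j ^ lk \<alpha> j)"
  have PL: "apow n (\<lambda>i. real (lk \<alpha> i)) \<alpha> = Pal" by (simp add: apow_def Pal_def)
  have PAa: "apow n (a \<alpha>) \<alpha> = PA" by (simp add: apow_def PA_def A_def)
  have A0: "\<And>j. j < n \<Longrightarrow> A j \<ge> 0" using a1 by (simp add: A_def)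
  have Az: "\<And>j. j < n \<Longrightarrow> A j = 0 \<longleftrightarrow> lk \<alpha> j = 0" using a1 by (simp add: A_def)
  have cA: "\<And>j. j < n \<Longrightarrow> c j - A j \<ge> 0" using a3 by (simp add: A_def c_def)
  have PApos: "PA > 0" unfolding PA_def
  proof (intro prod_pos)
    fix j assume "j \<in> {..<n}"
    then have j: "j < n" by simp
    show "0 < A j ^ lk \<alpha> j"
    proof (cases "lk \<alpha> j = 0")
      case False then have "A j > 0" using A0[OF j] Az[OF j] by simp
      then show ?thesis by simp
    qed simp
  qed
  have m_le: "m \<le> 2*d" using mdeg_le by (simp add: m_def)
  have D0: "2*d > 0" using d1 by simp
  define R where "R = \<bar>b\<bar> ^ (2*d) * Pal / (real (2*d) ^ (2*d) * PA)"
  have Rpos: "R > 0" using PApos Pal_pos b_ne d1 by (simp add: R_def)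
  define lam where "lam = (\<lambda>j. (A j / real (lk \<alpha> j)) powr (1 / real (2*d)))"
  define lam0 where "lam0 = (if m < 2*d then (R powr (1 / real (2*d - m))) powr (1 / real (2*d)) else 1)"
  have lam0D: "lam0 ^ (2*d) = (if m < 2*d then R powr (1 / real (2*d - m)) else 1)"
  proof (cases "m < 2*d")
    case True
    have "((R powr (1 / real (2*d - m))) powr (1 / real (2*d))) ^ (2*d) = R powr (1 / real (2*d - m))"
      by (rule root_pow[OF powr_ge_zero D0])
    then show ?thesis using True by (simp add: lam0_def)
  qed (simp add: lam0_def)
  have lam0nn: "lam0 \<ge> 0" by (simp add: lam0_def)
  have lamD: "\<And>j. j < n \<Longrightarrow> lam j ^ (2*d) = A j / real (lk \<alpha> j)"
    unfolding lam_def using D0 A0 by (intro root_pow) auto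
  have lamnn: "\<And>j. lam j \<ge> 0" by (simp add: lam_def)
  have alA: "\<And>j. j < n \<Longrightarrow> real (lk \<alpha> j) * (A j / real (lk \<alpha> j)) = A j"
    using Az by (case_tac "lk \<alpha> j = 0") auto
  obtain \<epsilon> where e: "\<forall>j. \<epsilon> j = 1 \<or> \<epsilon> j = (-1::real)" "b * (\<Prod>j<n. \<epsilon> j ^ lk \<alpha> j) = - \<bar>b\<bar>"
    using sign_vec[OF iD] by auto
  have eD: "\<And>j. \<epsilon> j ^ (2*d) = 1" using e(1) by (metis power_mult neg_one_even_power one_power2 even_mult_iff even_numeral)
  define t where "t = (\<lambda>i. if i < n then mconst (\<epsilon> i * lam i) * V i else mconst lam0)"
  define g where "g = (\<lambda>i. if i < n then lk \<alpha> i else 2*d - m)"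
  have sg: "sum g {..n} = 2*d"
  proof -
    have "sum g {..n} = g n + sum g {..<n}" unfolding atMost_split by simp
    also have "sum g {..<n} = m" by (simp add: g_def m_def mdeg_alpha)
    finally show ?thesis using m_le by (simp add: g_def)
  qed
  have tin: "\<And>i. i \<in> {..n} \<Longrightarrow> in_vars n (t i)"
    by (auto simp: t_def intro!: in_vars_mult in_vars_V)
  have H: "is_sos n (SH {..n} g t (2*d))" by (rule H_sos[OF _ tin sg d1]) simp
  have tpow: "\<And>i. i < n \<Longrightarrow> of_nat (lk \<alpha> i) * t i ^ (2*d) = mconst (A i) * V i ^ (2*d)"
  proof -
    fix i assume i: "i < n"
    have "of_nat (lk \<alpha> i) * t i ^ (2*d) = mconst (real (lk \<alpha> i) * (\<epsilon> i * lam i) ^ (2*d)) * V i ^ (2*d)"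
      using i by (simp add: t_def power_mult_distrib mconst_power of_nat_mconst mconst_mult[symmetric] mult.assoc)
    also have "real (lk \<alpha> i) * (\<epsilon> i * lam i) ^ (2*d) = A i"
      using i by (simp only: power_mult_distrib eD lamD[OF i] mult_1 alA[OF i])
    finally show "of_nat (lk \<alpha> i) * t i ^ (2*d) = mconst (A i) * V i ^ (2*d)" .
  qed
  have sumpart: "(\<Sum>i\<in>{..n}. of_nat (g i) * t i ^ (2*d)) =
      (\<Sum>i<n. mconst (A i) * V i ^ (2*d)) + mconst (real (2*d - m) * lam0 ^ (2*d))"
  proof -
    have "(\<Sum>i\<in>{..n}. of_nat (g i) * t i ^ (2*d)) = of_nat (g n) * t n ^ (2*d) + (\<Sum>i<n. of_nat (g i) * t i ^ (2*d))"
      unfolding atMost_split by simp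
    also have "(\<Sum>i<n. of_nat (g i) * t i ^ (2*d)) = (\<Sum>i<n. mconst (A i) * V i ^ (2*d))"
      by (rule sum.cong) (auto simp: g_def tpow)
    also have "of_nat (g n) * t n ^ (2*d) = mconst (real (2*d - m) * lam0 ^ (2*d))"
      by (simp add: g_def t_def mconst_power of_nat_mconst mconst_mult)
    finally show ?thesis by (simp add: add.commute)
  qed
  define E where "E = (\<Prod>j<n. \<epsilon> j ^ lk \<alpha> j)"
  define Lam where "Lam = (\<Prod>j<n. lam j ^ lk \<alpha> j)"
  have prodpart: "(\<Prod>i\<in>{..n}. t i ^ g i) = mconst (lam0 ^ (2*d - m) * (E * Lam)) * (\<Prod>i<n. V i ^ lk \<alpha> i)"
  proof -
    have "(\<Prod>i\<in>{..n}. t i ^ g i) = t n ^ g n * (\<Prod>i<n. t i ^ g i)"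
      unfolding atMost_split by simp
    also have "(\<Prod>i<n. t i ^ g i) = (\<Prod>i<n. mconst ((\<epsilon> i * lam i) ^ lk \<alpha> i) * V i ^ lk \<alpha> i)"
      by (rule prod.cong) (auto simp: g_def t_def power_mult_distrib mconst_power)
    also have "\<dots> = mconst (\<Prod>i<n. (\<epsilon> i * lam i) ^ lk \<alpha> i) * (\<Prod>i<n. V i ^ lk \<alpha> i)"
    proof -
      have "\<And>F :: nat \<Rightarrow> real. (\<Prod>i\<in>B. mconst (F i)) = mconst (\<Prod>i\<in>B. F i)" for B
        by (induction B rule: infinite_finite_induct) (auto simp: mconst_1 mconst_mult)
      then show ?thesis by (simp add: prod.distrib)
    qed
    also have "(\<Prod>i<n. (\<epsilon> i * lam i) ^ lk \<alpha> i) = E * Lam"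
      by (simp add: E_def Lam_def power_mult_distrib prod.distrib)
    also have "t n ^ g n = mconst (lam0 ^ (2*d - m))" by (simp add: t_def g_def mconst_power)
    finally show ?thesis by (simp add: mconst_mult[symmetric] mult.assoc)
  qed
  have EE: "E * E = 1"
  proof -
    have "E * E = (\<Prod>j<n. (\<epsilon> j * \<epsilon> j) ^ lk \<alpha> j)"
      by (simp add: E_def prod.distrib[symmetric] power_mult_distrib)
    also have "\<dots> = 1" using e(1) by (intro prod.neutral) (metis mult_1 mult_minus1 minus_minus power_one)
    finally show ?thesis .
  qed
  have Lnn: "real (2*d) * lam0 ^ (2*d - m) * Lam \<ge> 0"
    using lam0nn lamnn by (simp add: Lam_def prod_nonneg)
  have LamD: "Lam ^ (2*d) = PA / Pal"
  proof -
    have "Lam ^ (2*d) = (\<Prod>j<n. (lam j ^ (2*d)) ^ lk \<alpha> j)"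
      by (simp add: Lam_def prod_power_distrib power_mult[symmetric] mult.commute)
    also have "\<dots> = (\<Prod>j<n. A j ^ lk \<alpha> j / real (lk \<alpha> j) ^ lk \<alpha> j)"
      by (rule prod.cong) (auto simp: lamD power_divide)
    also have "\<dots> = PA / Pal" by (simp add: prod_dividef PA_def Pal_def)
    finally show ?thesis .
  qed
  have l0D: "(lam0 ^ (2*d - m)) ^ (2*d) = (if m < 2*d then R else 1)"
  proof -
    have "(lam0 ^ (2*d - m)) ^ (2*d) = (lam0 ^ (2*d)) ^ (2*d - m)"
      by (simp add: power_mult[symmetric] mult.commute)
    also have "\<dots> = (if m < 2*d then R else 1)"
    proof (cases "m < 2*d")
      case True
      have "(R powr (1 / real (2*d - m))) ^ (2*d - m) = R" using Rpos True by (intro root_pow) auto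
      then show ?thesis using True by (simp only: lam0D if_True)
    qed (simp add: lam0D)
    finally show ?thesis .
  qed
  have LD: "(real (2*d) * lam0 ^ (2*d - m) * Lam) ^ (2*d) = \<bar>b\<bar> ^ (2*d)"
  proof (cases "m < 2*d")
    case True
    have "(real (2*d) * lam0 ^ (2*d - m) * Lam) ^ (2*d) = real (2*d) ^ (2*d) * R * (PA / Pal)"
      using True by (simp only: power_mult_distrib l0D LamD if_True)
    also have "\<dots> = \<bar>b\<bar> ^ (2*d)" using PApos Pal_pos D0 by (simp add: R_def)
    finally show ?thesis .
  next
    case False
    then have mD: "mdeg \<alpha> = 2*d" using m_le by (simp add: m_def)
    have "(real (2*d) * lam0 ^ (2*d - m) * Lam) ^ (2*d) = real (2*d) ^ (2*d) * (PA / Pal)"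
      using False by (simp only: power_mult_distrib l0D LamD if_False mult_1_right)
    also have "\<dots> = \<bar>b\<bar> ^ (2*d)"
      using a2 mD PApos Pal_pos by (simp add: PL PAa b_def[symmetric])
    finally show ?thesis .
  qed
  have Leq: "real (2*d) * lam0 ^ (2*d - m) * Lam = \<bar>b\<bar>"
    by (rule power_eq_imp_eq_base[OF LD Lnn abs_ge_zero D0])
  have key: "real (2*d) * (lam0 ^ (2*d - m) * (E * Lam)) = - b"
  proof -
    have "real (2*d) * (lam0 ^ (2*d - m) * (E * Lam)) = E * \<bar>b\<bar>"
      using Leq by (simp add: algebra_simps)
    also have "\<dots> = E * (- (b * E))" using e(2) by (simp add: E_def)
    also have "\<dots> = - b * (E * E)" by (simp add: algebra_simps)
    finally show ?thesis by (simp add: EE)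
  qed
  have SHeq: "SH {..n} g t (2*d) = (\<Sum>i<n. mconst (A i) * V i ^ (2*d)) +
      mconst (real (2*d - m) * lam0 ^ (2*d)) + mconst b * (\<Prod>i<n. V i ^ lk \<alpha> i)"
  proof -
    have "of_nat (2*d) * (\<Prod>i\<in>{..n}. t i ^ g i) =
        mconst (real (2*d) * (lam0 ^ (2*d - m) * (E * Lam))) * (\<Prod>i<n. V i ^ lk \<alpha> i)"
      unfolding prodpart by (simp add: of_nat_mconst mult.assoc flip: mconst_mult)
    also have "\<dots> = mconst (- b) * (\<Prod>i<n. V i ^ lk \<alpha> i)" unfolding key ..
    finally have "of_nat (2*d) * (\<Prod>i\<in>{..n}. t i ^ g i) = mconst (- b) * (\<Prod>i<n. V i ^ lk \<alpha> i)" .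
    then show ?thesis unfolding SH_def sumpart
      by (simp add: mconst_def single_uminus)
  qed
  define K where "K = f0 - r - real (2*d - m) * lam0 ^ (2*d)"
  have Knn: "K \<ge> 0"
  proof (cases "m < 2*d")
    case True
    then show ?thesis using a4 lam0D
      by (simp add: K_def m_def PL PAa R_def b_def[symmetric] f0_def[symmetric])
  next
    case False
    then show ?thesis using a4 m_le by (simp add: K_def m_def f0_def[symmetric])
  qed
  have fin: "f - mconst r = SH {..n} g t (2*d) + (\<Sum>i<n. mconst (c i - A i) * V i ^ (2*d)) + mconst K"
  proof -
    have s: "(\<Sum>i<n. mconst (c i - A i) * V i ^ (2*d)) =
        (\<Sum>i<n. mconst (c i) * V i ^ (2*d)) - (\<Sum>i<n. mconst (A i) * V i ^ (2*d))"
      by (simp add: mconst_diff[symmetric] left_diff_distrib sum_subtractf)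
    show ?thesis
      unfolding SHeq s K_def by (subst f_decomp_V) (simp add: mconst_diff[symmetric] algebra_simps, simp add: mconst_add)
  qed
  show ?thesis unfolding fin
    by (intro sos_add H sos_sum sos_cV sos_const Knn cA) auto
qed

end



theorem mainTheorem5:
  fixes n d :: nat and f :: mpoly
  assumes "in_vars n f"
    and "total_degree f = 2 * d"
    and "d \<ge> 1"
    and "card (Omega n d f) = 1"
  shows "f_star n f = f_sos n f \<and> f_sos n f = f_gp n d f"
proof -
  from assms(4) obtain \<alpha> where Om: "Omega n d f = {\<alpha>}" by (meson card_1_singletonE)
  interpret Fctx n d f \<alpha> using assms Om by unfold_locales auto
  have 1: "f_sos n f \<le> f_star n f" by (rule sos_le_star)
  have 2: "f_gp n d f \<le> f_sos n f"
    unfolding f_gp_def f_sos_def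
  proof (rule Sup_subset_mono, rule image_mono, rule subsetI)
    fix r assume "r \<in> {r. gp_feasible n d f r}"
    then have gp: "gp_feasible n d f r" by simp
    show "r \<in> {r. is_sos n (f - mconst r)}"
      using sos_of_gp_noD[OF gp] sos_of_gp_D[OF gp] by (cases inDelta) auto
  qed
  have 3: "f_star n f \<le> f_gp n d f"
  proof (cases "f_star n f = -\<infinity>")
    case True then show ?thesis by simp
  next
    case False
    have low: "\<And>x. (\<forall>i\<ge>n. x i = 0) \<Longrightarrow> f_star n f \<le> ereal (meval f x)"
      unfolding f_star_def by (rule Inf_lower) auto
    have "f_star n f \<le> ereal (meval f (\<lambda>_. 0))" by (rule low) simp
    then have "f_star n f \<noteq> \<infinity>" by auto
    then obtain m where m: "f_star n f = ereal m" using False by (cases "f_star n f") auto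
    have Hr: "\<forall>x. (\<forall>i\<ge>n. x i = 0) \<longrightarrow> m \<le> meval f x"
      using low m by auto
    have "gp_feasible n d f m" by (rule gp_of_bound[OF Hr])
    then have "ereal m \<le> f_gp n d f" unfolding f_gp_def by (intro Sup_upper) auto
    then show ?thesis using m by simp
  qed
  show ?thesis using 1 2 3 by (meson order.antisym order.trans)
qed



end
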